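(* Assume the vector variational inequality defined by $F$ and $K$ is monotone. (a) If the proper Pareto solution set $\mathrm{Sol}^{pr}(F,K)$ is disconnected, then each connected component of $\mathrm{Sol}^{pr}(F,K)$ is unbounded. (b) If $\mathrm{Sol}^{pr}(F,K)$ is bounded and nonempty, then it is connected.
   Context: Let $K\subset\mathbb{R}^n$ be a nonempty closed convex set and $F_1,\dots,F_m:K\to\mathbb{R}^n$ continuous functions. The problem is monotone if each $F_l$ is monotone on $K$: $\langle F_l(y)-F_l(x),y-x\rangle\ge0$ for all $x,y\in K$. Let $\Delta=\{\xi\in\mathbb{R}^m_+:\sum_l\xi_l=1\}$, $\operatorname{ri}\Delta=\{\xi\in\Delta:\xi_l>0,\ l=1,\dots,m\}$ and $F_\xi=\sum_l\xi_lF_l$. For $G:K\to\mathbb{R}^n$, $\mathrm{Sol}(G,K)=\{x\in K:\langle G(x),y-x\rangle\ge0\ \forall y\in K\}$. The proper Pareto solution set is $\mathrm{Sol}^{pr}(F,K)=\bigcup_{\xi\in\operatorname{ri}\Delta}\mathrm{Sol}(F_\xi,K)$. *)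

theory Defs
  imports "HOL-Analysis.Analysis"
begin

definition VI_Sol :: "('a::real_inner \<Rightarrow> 'a) \<Rightarrow> 'a set \<Rightarrow> 'a set" where
  "VI_Sol G K = {x \<in> K. \<forall>y\<in>K. G x \<bullet> (y - x) \<ge> 0}"

definition ri_simplex :: "nat \<Rightarrow> (nat \<Rightarrow> real) set" where
  "ri_simplex m = {\<xi>. (\<forall>l<m. \<xi> l > 0) \<and> (\<Sum>l<m. \<xi> l) = 1}"

definition F_xi :: "nat \<Rightarrow> (nat \<Rightarrow> 'a \<Rightarrow> 'a::real_vector) \<Rightarrow> (nat \<Rightarrow> real) \<Rightarrow> 'a \<Rightarrow> 'a" where
  "F_xi m F \<xi> x = (\<Sum>l<m. \<xi> l *\<^sub>R F l x)"

definition Sol_pr :: "nat \<Rightarrow> (nat \<Rightarrow> 'a \<Rightarrow> 'a::real_inner) \<Rightarrow> 'a set \<Rightarrow> 'a set" where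
  "Sol_pr m F K = (\<Union>\<xi>\<in>ri_simplex m. VI_Sol (F_xi m F \<xi>) K)"

definition monotone_on_K :: "('a::real_inner \<Rightarrow> 'a) \<Rightarrow> 'a set \<Rightarrow> bool" where
  "monotone_on_K G K \<longleftrightarrow> (\<forall>x\<in>K. \<forall>y\<in>K. (G y - G x) \<bullet> (y - x) \<ge> 0)"

end

theory Submission
  imports Defs
begin

lemma VI_Sol_sub:
  assumes "x \<in> VI_Sol G K" "x \<in> K'" "K' \<subseteq> K"
  shows "x \<in> VI_Sol G K'"
  using assms unfolding VI_Sol_def by auto

lemma minty:
  assumes "convex K" "continuous_on K G" "x \<in> K" "\<forall>y\<in>K. G y \<bullet> (y - x) \<ge> 0"
  shows "x \<in> VI_Sol G K"
proof -
  have "G x \<bullet> (y - x) \<ge> 0" if y: "y \<in> K" for y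
  proof -
    define p where "p = (\<lambda>t::real. x + t *\<^sub>R (y - x))"
    have peq: "p t = (1 - t) *\<^sub>R x + t *\<^sub>R y" for t
      unfolding p_def by (simp add: algebra_simps)
    have pK: "p t \<in> K" if "t \<in> {0..1}" for t
      using assms(1) assms(3) y that unfolding peq convex_alt by auto
    have pos: "G (p t) \<bullet> (y - x) \<ge> 0" if "t \<in> {0<..1}" for t
    proof -
      have "0 \<le> G (p t) \<bullet> (p t - x)" using assms(4) pK[of t] that by auto
      also have "\<dots> = t * (G (p t) \<bullet> (y - x))" unfolding p_def by simp
      finally show ?thesis using that by (simp add: zero_le_mult_iff)
    qed
    have cp: "continuous_on {0..1} p" unfolding p_def by (intro continuous_intros)
    have cG: "continuous_on {0..1} (\<lambda>t. G (p t) \<bullet> (y - x))"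
      by (intro continuous_intros continuous_on_compose2[OF assms(2) cp]) (use pK in auto)
    have "((\<lambda>t. G (p t) \<bullet> (y - x)) \<longlongrightarrow> G (p 0) \<bullet> (y - x)) (at 0 within {0..1})"
      using cG by (simp add: continuous_on_def)
    then have lim: "((\<lambda>t. G (p t) \<bullet> (y - x)) \<longlongrightarrow> G (p 0) \<bullet> (y - x)) (at_right 0)"
      using at_within_Icc_at_right[of "0::real" 1] by simp
    have ev: "eventually (\<lambda>t. 0 \<le> G (p t) \<bullet> (y - x)) (at_right (0::real))"
      unfolding eventually_at_right_field by (intro exI[of _ 1]) (auto intro!: pos)
    have "0 \<le> G (p 0) \<bullet> (y - x)"
      by (rule tendsto_lowerbound[OF lim ev]) simp
    then show ?thesis unfolding p_def by simp
  qed
  then show ?thesis using assms(3) unfolding VI_Sol_def by auto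
qed

lemma VI_Sol_minty_eq:
  assumes "convex K" "continuous_on K G" "monotone_on_K G K"
  shows "VI_Sol G K = {x\<in>K. \<forall>y\<in>K. G y \<bullet> (y - x) \<ge> 0}"
proof
  show "VI_Sol G K \<subseteq> {x\<in>K. \<forall>y\<in>K. G y \<bullet> (y - x) \<ge> 0}"
  proof (intro subsetI CollectI conjI ballI)
    fix x y assume x: "x \<in> VI_Sol G K" and y: "y \<in> K"
    have "0 \<le> (G y - G x) \<bullet> (y - x)" using assms(3) x y unfolding monotone_on_K_def VI_Sol_def by auto
    moreover have "0 \<le> G x \<bullet> (y - x)" using x y unfolding VI_Sol_def by auto
    ultimately show "0 \<le> G y \<bullet> (y - x)" by (simp add: inner_diff_left)
  next
    show "x \<in> K" if "x \<in> VI_Sol G K" for x using that unfolding VI_Sol_def by auto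
  qed
  show "{x\<in>K. \<forall>y\<in>K. G y \<bullet> (y - x) \<ge> 0} \<subseteq> VI_Sol G K"
    using minty[OF assms(1,2)] by auto
qed

lemma convex_VI_Sol:
  assumes "convex K" "continuous_on K G" "monotone_on_K G K"
  shows "convex (VI_Sol G K)"
  unfolding VI_Sol_minty_eq[OF assms] convex_alt
proof (intro ballI allI impI CollectI conjI)
  fix x z :: 'a and u :: real
  assume x: "x \<in> {x\<in>K. \<forall>y\<in>K. 0 \<le> G y \<bullet> (y - x)}" and z: "z \<in> {x\<in>K. \<forall>y\<in>K. 0 \<le> G y \<bullet> (y - x)}"
    and u: "0 \<le> u \<and> u \<le> 1"
  show "(1 - u) *\<^sub>R x + u *\<^sub>R z \<in> K" using assms(1) x z u unfolding convex_alt by auto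
  fix y assume y: "y \<in> K"
  have "G y \<bullet> (y - ((1 - u) *\<^sub>R x + u *\<^sub>R z)) = (1 - u) * (G y \<bullet> (y - x)) + u * (G y \<bullet> (y - z))"
    by (simp add: algebra_simps inner_diff_right inner_add_right)
  also have "\<dots> \<ge> 0" using x z y u by (intro add_nonneg_nonneg mult_nonneg_nonneg) auto
  finally show "0 \<le> G y \<bullet> (y - ((1 - u) *\<^sub>R x + u *\<^sub>R z))" .
qed

lemma local_global:
  assumes "convex K" "x \<in> VI_Sol G (K \<inter> cball 0 R)" "norm x < R"
  shows "x \<in> VI_Sol G K"
proof -
  have xK: "x \<in> K" using assms(2) unfolding VI_Sol_def by auto
  have "G x \<bullet> (y - x) \<ge> 0" if y: "y \<in> K" for y
  proof (cases "y = x")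
    case True then show ?thesis by simp
  next
    case False
    define s where "s = min 1 ((R - norm x) / norm (y - x))"
    have ny: "norm (y - x) > 0" using False by simp
    have s0: "s > 0" unfolding s_def using assms(3) ny by auto
    have s1: "s \<le> 1" unfolding s_def by auto
    have "s * norm (y - x) \<le> R - norm x" unfolding s_def using ny
      by (metis min.cobounded2 mult.commute nonzero_mult_div_cancel_left order_less_irrefl mult_left_mono norm_ge_zero times_divide_eq_right)
    define z where "z = x + s *\<^sub>R (y - x)"
    have "norm z \<le> norm x + s * norm (y - x)" unfolding z_def using s0
      by (metis abs_of_pos norm_scaleR norm_triangle_ineq)
    then have zc: "z \<in> cball 0 R" using \<open>s * norm (y - x) \<le> R - norm x\<close> by simp
    have "z = (1 - s) *\<^sub>R x + s *\<^sub>R y" unfolding z_def by (simp add: algebra_simps)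
    then have zK: "z \<in> K" using assms(1) xK y s0 s1 unfolding convex_alt by auto
    have "0 \<le> G x \<bullet> (z - x)" using assms(2) zK zc unfolding VI_Sol_def by auto
    also have "\<dots> = s * (G x \<bullet> (y - x))" unfolding z_def by simp
    finally show ?thesis using s0 by (simp add: zero_le_mult_iff)
  qed
  then show ?thesis using xK unfolding VI_Sol_def by auto
qed

lemma hartman_stampacchia:
  fixes G :: "'a::euclidean_space \<Rightarrow> 'a"
  assumes "compact K" "convex K" "K \<noteq> {}" "continuous_on K G"
  shows "VI_Sol G K \<noteq> {}"
proof -
  have cK: "closed K" using assms(1) compact_imp_closed by auto
  define f where "f = (\<lambda>x. closest_point K (x - G x))"
  have "continuous_on K f" unfolding f_def
    by (intro continuous_on_compose2[OF continuous_on_closest_point[OF assms(2) cK assms(3)]]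
        continuous_intros assms(4)) auto
  moreover have "f \<in> K \<rightarrow> K" unfolding f_def using closest_point_in_set[OF cK assms(3)] by auto
  ultimately obtain x where x: "x \<in> K" "f x = x"
    using brouwer[OF assms(1,2,3)] by metis
  have "G x \<bullet> (y - x) \<ge> 0" if "y \<in> K" for y
    using closest_point_dot[OF assms(2) cK that, of "x - G x"] x(2) unfolding f_def
    by (simp add: inner_minus_left)
  then show ?thesis using x unfolding VI_Sol_def by auto
qed

lemma ivt_norm:
  fixes V :: "'a::real_normed_vector set"
  assumes "convex V" "z \<in> V" "w \<in> V" "norm z \<le> r" "r \<le> norm w"
  shows "\<exists>u\<in>V. norm u = r"
proof -
  define f where "f = (\<lambda>t::real. norm ((1 - t) *\<^sub>R z + t *\<^sub>R w))"
  have "continuous_on {0..1} f" unfolding f_def by (intro continuous_intros)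
  then obtain t where t: "0 \<le> t" "t \<le> 1" "f t = r"
    using IVT'[of f 0 r 1] assms(4,5) unfolding f_def by auto
  then show ?thesis using assms(1-3) unfolding f_def convex_alt by auto
qed

definition Hfam :: "('a::real_vector \<Rightarrow> 'a) \<Rightarrow> ('a \<Rightarrow> 'a) \<Rightarrow> real \<Rightarrow> 'a \<Rightarrow> 'a" where
  "Hfam G0 G1 t x = (1 - t) *\<^sub>R G0 x + t *\<^sub>R G1 x"

lemma Hfam_cont:
  fixes G0 :: "'a::real_normed_vector \<Rightarrow> 'a"
  assumes "continuous_on K G0" "continuous_on K G1"
  shows "continuous_on K (Hfam G0 G1 t)"
  unfolding Hfam_def by (intro continuous_intros assms)

lemma Hfam_mono:
  assumes "monotone_on_K G0 K" "monotone_on_K G1 K" "t \<in> {0..1}"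
  shows "monotone_on_K (Hfam G0 G1 t) K"
  unfolding monotone_on_K_def
proof (intro ballI)
  fix x y assume x: "x \<in> K" and y: "y \<in> K"
  have "(Hfam G0 G1 t y - Hfam G0 G1 t x) \<bullet> (y - x)
      = (1 - t) * ((G0 y - G0 x) \<bullet> (y - x)) + t * ((G1 y - G1 x) \<bullet> (y - x))"
    unfolding Hfam_def by (simp add: algebra_simps inner_diff_left inner_add_left)
  also have "\<dots> \<ge> 0" using assms x y unfolding monotone_on_K_def
    by (intro add_nonneg_nonneg mult_nonneg_nonneg) auto
  finally show "0 \<le> (Hfam G0 G1 t y - Hfam G0 G1 t x) \<bullet> (y - x)" .
qed

lemma monotone_on_K_subset:
  "monotone_on_K G K \<Longrightarrow> K' \<subseteq> K \<Longrightarrow> monotone_on_K G K'"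
  unfolding monotone_on_K_def by blast

lemma closed_graph:
  fixes K :: "'a::euclidean_space set"
  assumes "closed K" "continuous_on K G0" "continuous_on K G1"
    and "\<forall>n. x n \<in> VI_Sol (Hfam G0 G1 (t n)) K" "t \<longlonglongrightarrow> t0" "x \<longlonglongrightarrow> x0"
  shows "x0 \<in> VI_Sol (Hfam G0 G1 t0) K"
proof -
  have xK: "\<forall>n. x n \<in> K" using assms(4) unfolding VI_Sol_def by auto
  have x0K: "x0 \<in> K" using closed_sequentially[OF assms(1) _ assms(6)] xK by auto
  have l0: "(\<lambda>n. G0 (x n)) \<longlonglongrightarrow> G0 x0"
    using assms(2) x0K xK assms(6) unfolding continuous_on_sequentially comp_def by auto
  have l1: "(\<lambda>n. G1 (x n)) \<longlonglongrightarrow> G1 x0"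
    using assms(3) x0K xK assms(6) unfolding continuous_on_sequentially comp_def by auto
  have "Hfam G0 G1 t0 x0 \<bullet> (y - x0) \<ge> 0" if y: "y \<in> K" for y
  proof -
    have "(\<lambda>n. Hfam G0 G1 (t n) (x n) \<bullet> (y - x n)) \<longlonglongrightarrow> Hfam G0 G1 t0 x0 \<bullet> (y - x0)"
      unfolding Hfam_def by (intro tendsto_intros l0 l1 assms(5,6))
    moreover have "\<forall>n. Hfam G0 G1 (t n) (x n) \<bullet> (y - x n) \<ge> 0"
      using assms(4) y unfolding VI_Sol_def by auto
    ultimately show ?thesis by (intro LIMSEQ_le_const) auto
  qed
  then show ?thesis using x0K unfolding VI_Sol_def by auto
qed

lemma seq_limit_sol:
  fixes K :: "'a::euclidean_space set"
  assumes "closed K" "continuous_on K G0" "continuous_on K G1" "closed T"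
    and "s \<longlonglongrightarrow> s0" "\<forall>n. x n \<in> VI_Sol (Hfam G0 G1 (s n)) K \<inter> T \<inter> cball 0 R"
  shows "\<exists>z. z \<in> VI_Sol (Hfam G0 G1 s0) K \<inter> T"
proof -
  obtain l r where l: "l \<in> cball 0 R" and r: "strict_mono r" "(x \<circ> r) \<longlonglongrightarrow> l"
    using compact_imp_seq_compact[OF compact_cball[of "0::'a" R]] assms(6)
    unfolding seq_compact_def by blast
  have "l \<in> VI_Sol (Hfam G0 G1 s0) K"
    using closed_graph[OF assms(1-3), of "x \<circ> r" "s \<circ> r" s0 l] assms(6)
      LIMSEQ_subseq_LIMSEQ[OF assms(5) r(1)] r(2) by auto
  moreover have "l \<in> T"
    using closed_sequentially[OF assms(4) _ r(2)] assms(6) by auto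
  ultimately show ?thesis by blast
qed

lemma stab:
  fixes K :: "'a::euclidean_space set"
  assumes K: "closed K" "convex K"
    and c: "continuous_on K G0" "continuous_on K G1"
    and mo: "monotone_on_K G0 K" "monotone_on_K G1 K"
    and t0: "t0 \<in> {0..1}" "VI_Sol (Hfam G0 G1 t0) K \<noteq> {}" "bounded (VI_Sol (Hfam G0 G1 t0) K)"
  shows "\<exists>\<delta>>0. \<exists>R. \<forall>t\<in>{0..1}. \<bar>t - t0\<bar> < \<delta> \<longrightarrow>
            VI_Sol (Hfam G0 G1 t) K \<noteq> {} \<and> VI_Sol (Hfam G0 G1 t) K \<subseteq> cball 0 R"
proof -
  obtain R0 where R0: "R0 > 0" "VI_Sol (Hfam G0 G1 t0) K \<subseteq> ball 0 R0"
    using bounded_subset_ballD[OF t0(3)] by blast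
  define R where "R = R0 + 1"
  define KR where "KR = K \<inter> cball 0 R"
  obtain x0 where x0: "x0 \<in> VI_Sol (Hfam G0 G1 t0) K" using t0(2) by blast
  have nx0: "norm x0 < R0" using x0 R0(2) by auto
  have x0K: "x0 \<in> K" using x0 unfolding VI_Sol_def by auto
  have x0KR: "x0 \<in> KR" unfolding KR_def using x0K nx0 R_def by auto
  have KRsub: "KR \<subseteq> K" unfolding KR_def by auto
  have KRc: "closed KR" "convex KR" "compact KR" unfolding KR_def using K
    by (auto intro: closed_Int_compact convex_Int)
  have cR: "continuous_on KR (Hfam G0 G1 t)" for t
    using Hfam_cont[OF c] continuous_on_subset KRsub by blast
  have cR0: "continuous_on KR G0" "continuous_on KR G1"
    using c continuous_on_subset KRsub by blast+
  have mR: "monotone_on_K (Hfam G0 G1 t) KR" if "t \<in> {0..1}" for t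
    using Hfam_mono[OF mo that] monotone_on_K_subset KRsub by blast
  have claimA: "\<exists>\<delta>>0. \<forall>t\<in>{0..1}. \<bar>t - t0\<bar> < \<delta> \<longrightarrow> (\<forall>z\<in>VI_Sol (Hfam G0 G1 t) KR. norm z \<noteq> R)"
  proof (rule ccontr)
    assume "\<not> ?thesis"
    then have "\<forall>n. \<exists>t z. t \<in> {0..1} \<and> \<bar>t - t0\<bar> < 1 / Suc n \<and> z \<in> VI_Sol (Hfam G0 G1 t) KR \<and> norm z = R"
      by (metis of_nat_0_less_iff zero_less_Suc zero_less_divide_1_iff)
    then obtain T Z where TZ: "\<And>n. T n \<in> {0..1}" "\<And>n. \<bar>T n - t0\<bar> < 1 / Suc n"
      "\<And>n. Z n \<in> VI_Sol (Hfam G0 G1 (T n)) KR" "\<And>n. norm (Z n) = R"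
      by metis
    have "(\<lambda>n. T n - t0) \<longlonglongrightarrow> 0"
      by (rule Lim_null_comparison[OF _ LIMSEQ_inverse_real_of_nat])
        (use TZ(2) in \<open>auto intro!: always_eventually less_imp_le simp: inverse_eq_divide\<close>)
    then have Tl: "T \<longlonglongrightarrow> t0" by (simp add: LIM_zero_iff)
    have "\<exists>z. z \<in> VI_Sol (Hfam G0 G1 t0) KR \<inter> sphere 0 R"
      by (rule seq_limit_sol[OF KRc(1) cR0 closed_sphere[of "0::'a" R] Tl, of Z R]) (use TZ(3,4) in auto)
    then obtain zb where zb: "zb \<in> VI_Sol (Hfam G0 G1 t0) KR" "norm zb = R" by auto
    have cv: "convex (VI_Sol (Hfam G0 G1 t0) KR)"
      by (rule convex_VI_Sol[OF KRc(2) cR mR[OF t0(1)]])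
    have "x0 \<in> VI_Sol (Hfam G0 G1 t0) KR" using VI_Sol_sub[OF x0 x0KR KRsub] .
    then obtain u where u: "u \<in> VI_Sol (Hfam G0 G1 t0) KR" "norm u = R0"
      using ivt_norm[OF cv, of x0 zb R0] nx0 zb R_def by auto
    have "u \<in> VI_Sol (Hfam G0 G1 t0) K"
      using local_global[OF K(2), of u _ R] u R_def unfolding KR_def by auto
    then show False using R0(2) u(2) by auto
  qed
  then obtain \<delta> where \<delta>: "\<delta> > 0" "\<And>t z. t \<in> {0..1} \<Longrightarrow> \<bar>t - t0\<bar> < \<delta> \<Longrightarrow> z \<in> VI_Sol (Hfam G0 G1 t) KR \<Longrightarrow> norm z \<noteq> R"
    by blast
  have "VI_Sol (Hfam G0 G1 t) K \<noteq> {} \<and> VI_Sol (Hfam G0 G1 t) K \<subseteq> cball 0 R"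
    if t: "t \<in> {0..1}" "\<bar>t - t0\<bar> < \<delta>" for t
  proof -
    obtain z where z: "z \<in> VI_Sol (Hfam G0 G1 t) KR"
      using hartman_stampacchia[OF KRc(3,2) _ cR] x0KR by blast
    have "norm z \<le> R" using z unfolding VI_Sol_def KR_def by auto
    then have nz: "norm z < R" using \<delta>(2)[OF t z] by auto
    have zK: "z \<in> VI_Sol (Hfam G0 G1 t) K"
      using local_global[OF K(2), of z _ R] z nz unfolding KR_def by auto
    have cv: "convex (VI_Sol (Hfam G0 G1 t) K)"
      by (rule convex_VI_Sol[OF K(2) Hfam_cont[OF c] Hfam_mono[OF mo t(1)]])
    have "norm w \<le> R" if w: "w \<in> VI_Sol (Hfam G0 G1 t) K" for w
    proof (rule ccontr)
      assume "\<not> norm w \<le> R"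
      then obtain u where u: "u \<in> VI_Sol (Hfam G0 G1 t) K" "norm u = R"
        using ivt_norm[OF cv zK w, of R] nz by auto
      have "u \<in> VI_Sol (Hfam G0 G1 t) KR"
        using VI_Sol_sub[OF u(1) _ KRsub] u unfolding KR_def VI_Sol_def by auto
      then show False using \<delta>(2)[OF t] u(2) by blast
    qed
    then show ?thesis using zK by auto
  qed
  then show ?thesis using \<delta>(1) by blast
qed

lemma conn_union:
  fixes K :: "'a::euclidean_space set"
  assumes K: "closed K" "convex K"
    and c: "continuous_on K G0" "continuous_on K G1"
    and mo: "monotone_on_K G0 K" "monotone_on_K G1 K"
    and ab: "{a..b} \<subseteq> {0..1}"
    and ne: "\<forall>t\<in>{a..b}. VI_Sol (Hfam G0 G1 t) K \<noteq> {} \<and> VI_Sol (Hfam G0 G1 t) K \<subseteq> cball 0 R"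
  shows "connected (\<Union>t\<in>{a..b}. VI_Sol (Hfam G0 G1 t) K)"
proof -
  define U where "U = (\<Union>t\<in>{a..b}. VI_Sol (Hfam G0 G1 t) K)"
  have Usub: "VI_Sol (Hfam G0 G1 t) K \<subseteq> U" if "t \<in> {a..b}" for t using that unfolding U_def by auto
  have Uel: "\<exists>t\<in>{a..b}. x \<in> VI_Sol (Hfam G0 G1 t) K" if "x \<in> U" for x using that unfolding U_def by auto
  have "connected U"
  proof (rule ccontr)
  assume "\<not> connected U"
  then obtain A B where AB: "closed A" "closed B" "U \<subseteq> A \<union> B" "A \<inter> B \<inter> U = {}"
    "A \<inter> U \<noteq> {}" "B \<inter> U \<noteq> {}"
    unfolding connected_closed by blast
  have closedI: "closed {t\<in>{a..b}. VI_Sol (Hfam G0 G1 t) K \<inter> E \<noteq> {}}" if E: "closed E" for E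
    unfolding closed_sequential_limits
  proof (intro allI impI)
    fix s l assume sl: "(\<forall>n. s n \<in> {t\<in>{a..b}. VI_Sol (Hfam G0 G1 t) K \<inter> E \<noteq> {}}) \<and> s \<longlonglongrightarrow> l"
    have s1: "s n \<in> {a..b}" "VI_Sol (Hfam G0 G1 (s n)) K \<inter> E \<noteq> {}" for n
      using conjunct1[OF sl, rule_format, of n] by simp_all
    have sl2: "s \<longlonglongrightarrow> l" using sl by simp
    have l: "l \<in> {a..b}" by (rule closed_sequentially[OF closed_atLeastAtMost s1(1) sl2])
    have "\<forall>n. \<exists>x. x \<in> VI_Sol (Hfam G0 G1 (s n)) K \<inter> E" using s1(2) by (metis ex_in_conv)
    then obtain x where x: "\<And>n. x n \<in> VI_Sol (Hfam G0 G1 (s n)) K \<inter> E" by metis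
    have sab: "s n \<in> {a..b}" for n by (rule s1(1))
    have xc: "x n \<in> VI_Sol (Hfam G0 G1 (s n)) K \<inter> E \<inter> cball 0 R" for n
    proof -
      have "VI_Sol (Hfam G0 G1 (s n)) K \<subseteq> cball 0 R" using ne sab[of n] by blast
      then show ?thesis using x[of n] by blast
    qed
    have "\<exists>z. z \<in> VI_Sol (Hfam G0 G1 l) K \<inter> E"
      by (rule seq_limit_sol[OF K(1) c E sl2, of x R]) (use xc in blast)
    then show "l \<in> {t\<in>{a..b}. VI_Sol (Hfam G0 G1 t) K \<inter> E \<noteq> {}}" using l by auto
  qed
  define I1 where "I1 = {t\<in>{a..b}. VI_Sol (Hfam G0 G1 t) K \<inter> A \<noteq> {}}"
  define I2 where "I2 = {t\<in>{a..b}. VI_Sol (Hfam G0 G1 t) K \<inter> B \<noteq> {}}"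
  have disj: "False" if "t \<in> I1" "t \<in> I2" for t
  proof -
    have t: "t \<in> {a..b}" using that unfolding I1_def by auto
    have "connected (VI_Sol (Hfam G0 G1 t) K)"
      using convex_connected convex_VI_Sol[OF K(2) Hfam_cont[OF c] Hfam_mono[OF mo]] t ab by blast
    then have nc: "\<not> (closed A \<and> closed B \<and> VI_Sol (Hfam G0 G1 t) K \<subseteq> A \<union> B \<and> A \<inter> B \<inter> VI_Sol (Hfam G0 G1 t) K = {}
       \<and> A \<inter> VI_Sol (Hfam G0 G1 t) K \<noteq> {} \<and> B \<inter> VI_Sol (Hfam G0 G1 t) K \<noteq> {})"
      unfolding connected_closed by blast
    have sub: "VI_Sol (Hfam G0 G1 t) K \<subseteq> U" using Usub t by auto
    have "VI_Sol (Hfam G0 G1 t) K \<subseteq> A \<union> B" using sub AB(3) by blast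
    moreover have "A \<inter> B \<inter> VI_Sol (Hfam G0 G1 t) K = {}" using sub AB(4) by blast
    moreover have "A \<inter> VI_Sol (Hfam G0 G1 t) K \<noteq> {}" "B \<inter> VI_Sol (Hfam G0 G1 t) K \<noteq> {}"
      using that unfolding I1_def I2_def by auto
    ultimately show False using nc AB(1,2) by blast
  qed
  have "connected {a..b}" by simp
  then have nc: "\<not> (closed I1 \<and> closed I2 \<and> {a..b} \<subseteq> I1 \<union> I2 \<and> I1 \<inter> I2 \<inter> {a..b} = {} \<and> I1 \<inter> {a..b} \<noteq> {} \<and> I2 \<inter> {a..b} \<noteq> {})"
    unfolding connected_closed by blast
  have "closed I1" "closed I2" unfolding I1_def I2_def using closedI AB by auto
  moreover have "{a..b} \<subseteq> I1 \<union> I2"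
  proof
    fix t assume t: "t \<in> {a..b}"
    then obtain x where "x \<in> VI_Sol (Hfam G0 G1 t) K" using ne by blast
    then have "x \<in> A \<union> B" using Usub[OF t] AB(3) by blast
    then show "t \<in> I1 \<union> I2" unfolding I1_def I2_def using t \<open>x \<in> VI_Sol (Hfam G0 G1 t) K\<close> by blast
  qed
  moreover have "I1 \<inter> I2 \<inter> {a..b} = {}" using disj by blast
  moreover have "I1 \<inter> {a..b} \<noteq> {}"
  proof -
    obtain x where "x \<in> A" "x \<in> U" using AB(5) by blast
    then obtain t where "t \<in> {a..b}" "x \<in> VI_Sol (Hfam G0 G1 t) K" using Uel by blast
    then show ?thesis unfolding I1_def using \<open>x \<in> A\<close> by blast
  qed
  moreover have "I2 \<inter> {a..b} \<noteq> {}"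
  proof -
    obtain x where "x \<in> B" "x \<in> U" using AB(6) by blast
    then obtain t where "t \<in> {a..b}" "x \<in> VI_Sol (Hfam G0 G1 t) K" using Uel by blast
    then show ?thesis unfolding I2_def using \<open>x \<in> B\<close> by blast
  qed
  ultimately show False using nc by blast
  qed
  then show ?thesis unfolding U_def .
qed

lemma F_xi_cont:
  fixes F :: "nat \<Rightarrow> 'a::real_normed_vector \<Rightarrow> 'a"
  assumes "\<And>l. l < m \<Longrightarrow> continuous_on K (F l)"
  shows "continuous_on K (F_xi m F \<xi>)"
  unfolding F_xi_def by (intro continuous_intros assms) auto

lemma F_xi_mono:
  assumes "\<And>l. l < m \<Longrightarrow> monotone_on_K (F l) K" "\<xi> \<in> ri_simplex m"
  shows "monotone_on_K (F_xi m F \<xi>) K"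
  unfolding monotone_on_K_def
proof (intro ballI)
  fix x y assume x: "x \<in> K" and y: "y \<in> K"
  have "(F_xi m F \<xi> y - F_xi m F \<xi> x) \<bullet> (y - x) = (\<Sum>l<m. \<xi> l * ((F l y - F l x) \<bullet> (y - x)))"
    unfolding F_xi_def by (simp add: sum_subtractf[symmetric] inner_sum_left scaleR_diff_right[symmetric])
  also have "\<dots> \<ge> 0" using assms x y unfolding monotone_on_K_def ri_simplex_def
    by (intro sum_nonneg mult_nonneg_nonneg) (auto simp: less_imp_le)
  finally show "0 \<le> (F_xi m F \<xi> y - F_xi m F \<xi> x) \<bullet> (y - x)" .
qed

lemma seg_ri:
  assumes "\<xi>0 \<in> ri_simplex m" "\<xi>1 \<in> ri_simplex m" "t \<in> {0..1}"
  shows "(\<lambda>l. (1 - t) * \<xi>0 l + t * \<xi>1 l) \<in> ri_simplex m"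
proof -
  have "(1 - t) * \<xi>0 l + t * \<xi>1 l > 0" if "l < m" for l
  proof (cases "t = 0")
    case True then show ?thesis using assms that unfolding ri_simplex_def by auto
  next
    case False
    then have "t * \<xi>1 l > 0" using assms that unfolding ri_simplex_def by auto
    moreover have "(1 - t) * \<xi>0 l \<ge> 0" using assms that unfolding ri_simplex_def by (auto simp: less_imp_le)
    ultimately show ?thesis by linarith
  qed
  moreover have "(\<Sum>l<m. (1 - t) * \<xi>0 l + t * \<xi>1 l) = 1"
    using assms unfolding ri_simplex_def by (simp add: sum.distrib sum_distrib_left[symmetric])
  ultimately show ?thesis unfolding ri_simplex_def by auto
qed

lemma seg_F_xi:
  "F_xi m F (\<lambda>l. (1 - t) * \<xi>0 l + t * \<xi>1 l) = Hfam (F_xi m F \<xi>0) (F_xi m F \<xi>1) t"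
  unfolding F_xi_def Hfam_def
  by (rule ext) (simp add: scaleR_add_left sum.distrib scaleR_sum_right)

theorem theorem4:
  fixes K :: "'n::euclidean_space set" and F :: "nat \<Rightarrow> 'n \<Rightarrow> 'n" and m :: nat
  assumes "K \<noteq> {}" and "closed K" and "convex K"
    and "\<And>l. l < m \<Longrightarrow> continuous_on K (F l)"
    and "\<And>l. l < m \<Longrightarrow> monotone_on_K (F l) K"
  shows "(\<not> connected (Sol_pr m F K) \<longrightarrow>
            (\<forall>x\<in>Sol_pr m F K. \<not> bounded (connected_component_set (Sol_pr m F K) x)))
       \<and> (bounded (Sol_pr m F K) \<and> Sol_pr m F K \<noteq> {} \<longrightarrow> connected (Sol_pr m F K))"
proof -
  define S where "S = Sol_pr m F K"
  have Ssub: "VI_Sol (F_xi m F \<xi>) K \<subseteq> S" if "\<xi> \<in> ri_simplex m" for \<xi>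
    using that unfolding S_def Sol_pr_def by auto
  have Sel: "\<exists>\<xi>\<in>ri_simplex m. x \<in> VI_Sol (F_xi m F \<xi>) K" if "x \<in> S" for x
    using that unfolding S_def Sol_pr_def by auto
  have partA: "\<not> bounded (connected_component_set S x)" if nc: "\<not> connected S" and x: "x \<in> S" for x
  proof
    define C where "C = connected_component_set S x"
    assume bC: "bounded C"
    obtain RC where RC: "C \<subseteq> cball 0 RC"
      using bounded_subset_ballD[OF bC, of 0] ball_subset_cball by blast
    obtain EC where EC: "closed EC" "C = S \<inter> EC"
      using closedin_connected_component[of S x] unfolding C_def closedin_closed by blast
    have CS: "C \<subseteq> S" unfolding C_def by (rule connected_component_subset)
    obtain \<xi>0 where \<xi>0: "\<xi>0 \<in> ri_simplex m" "x \<in> VI_Sol (F_xi m F \<xi>0) K" using Sel[OF x] by blast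
    have key: "VI_Sol (F_xi m F \<xi>1) K \<subseteq> C" if \<xi>1: "\<xi>1 \<in> ri_simplex m" for \<xi>1
    proof -
      define G0 where "G0 = F_xi m F \<xi>0"
      define G1 where "G1 = F_xi m F \<xi>1"
      have c: "continuous_on K G0" "continuous_on K G1"
        unfolding G0_def G1_def using F_xi_cont assms(4) by blast+
      have mo: "monotone_on_K G0 K" "monotone_on_K G1 K"
        unfolding G0_def G1_def using F_xi_mono assms(5) \<xi>0(1) \<xi>1 by blast+
      define \<Psi> where "\<Psi> t = VI_Sol (Hfam G0 G1 t) K" for t
      have \<Psi>S: "\<Psi> t \<subseteq> S" if "t \<in> {0..1}" for t
        using Ssub[OF seg_ri[OF \<xi>0(1) \<xi>1 that]] unfolding \<Psi>_def G0_def G1_def seg_F_xi .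
      have \<Psi>conn: "connected (\<Psi> t)" if "t \<in> {0..1}" for t
        unfolding \<Psi>_def
        using convex_connected convex_VI_Sol[OF assms(3) Hfam_cont[OF c] Hfam_mono[OF mo that]] by blast
      have compC: "\<Psi> t \<subseteq> C" if t: "t \<in> {0..1}" and y: "y \<in> \<Psi> t" "y \<in> C" for t y
      proof -
        have "\<Psi> t \<subseteq> connected_component_set S y"
          by (rule connected_component_maximal[OF y(1) \<Psi>conn[OF t] \<Psi>S[OF t]])
        also have "\<dots> = C" unfolding C_def using y(2) C_def connected_component_eq by blast
        finally show ?thesis .
      qed
      define T where "T = {t\<in>{0..1}. \<Psi> t \<noteq> {} \<and> \<Psi> t \<subseteq> C}"
      have T0: "0 \<in> T"
      proof -
        have "\<Psi> 0 = VI_Sol (F_xi m F \<xi>0) K" unfolding \<Psi>_def Hfam_def G0_def by simp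
        then show ?thesis using compC[of 0 x] \<xi>0(2) x unfolding T_def C_def
          by (auto simp: connected_component_refl_eq)
      qed
      have Tclosed: "closed T"
        unfolding closed_sequential_limits
      proof (intro allI impI)
        fix s l assume sl: "(\<forall>n. s n \<in> T) \<and> s \<longlonglongrightarrow> l"
        have s1: "s n \<in> {0..1}" "\<Psi> (s n) \<noteq> {}" "\<Psi> (s n) \<subseteq> C" for n
          using conjunct1[OF sl, rule_format, of n] unfolding T_def by simp_all
        have sl2: "s \<longlonglongrightarrow> l" using sl by simp
        have l: "l \<in> {0..1}" by (rule closed_sequentially[OF closed_atLeastAtMost s1(1) sl2])
        have "\<forall>n. \<exists>y. y \<in> \<Psi> (s n)" using s1(2) by (metis ex_in_conv)
        then obtain y where y: "\<And>n. y n \<in> \<Psi> (s n)" by metis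
        have yc: "y n \<in> VI_Sol (Hfam G0 G1 (s n)) K \<inter> EC \<inter> cball 0 RC" for n
          using y[of n] s1(3)[of n] RC EC(2) unfolding \<Psi>_def by blast
        have "\<exists>z. z \<in> VI_Sol (Hfam G0 G1 l) K \<inter> EC"
          by (rule seq_limit_sol[OF assms(2) c EC(1) sl2, of y RC]) (use yc in blast)
        then obtain z where z: "z \<in> \<Psi> l" "z \<in> EC" unfolding \<Psi>_def by blast
        have "z \<in> C" using z \<Psi>S[OF l] EC(2) by blast
        then show "l \<in> T" using compC[OF l z(1)] z(1) l unfolding T_def by blast
      qed
      have Topen: "openin (top_of_set {0..1}) T"
        unfolding openin_euclidean_subtopology_iff
      proof (intro conjI ballI)
        show "T \<subseteq> {0..1}" unfolding T_def by blast
        fix t assume t: "t \<in> T"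
        have t01: "t \<in> {0..1}" and tne: "\<Psi> t \<noteq> {}" and tC: "\<Psi> t \<subseteq> C" using t unfolding T_def by auto
        have "bounded (\<Psi> t)" using bounded_subset[OF bC tC] .
        then obtain \<delta> R where \<delta>: "\<delta> > 0"
          "\<And>s. s \<in> {0..1} \<Longrightarrow> \<bar>s - t\<bar> < \<delta> \<Longrightarrow> \<Psi> s \<noteq> {} \<and> \<Psi> s \<subseteq> cball 0 R"
          using stab[OF assms(2,3) c mo t01] tne unfolding \<Psi>_def by blast
        show "\<exists>e>0. \<forall>t'\<in>{0..1}. dist t' t < e \<longrightarrow> t' \<in> T"
        proof (intro exI[of _ \<delta>] conjI ballI impI)
          show "\<delta> > 0" by (rule \<delta>(1))
          fix t' assume t': "t' \<in> {0..1}" "dist t' t < \<delta>"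
          define a where "a = min t t'"
          define b where "b = max t t'"
          have ab: "{a..b} \<subseteq> {0..1}" using t01 t' unfolding a_def b_def by auto
          have near: "\<bar>s - t\<bar> < \<delta>" if "s \<in> {a..b}" for s
            using that t'(2) unfolding a_def b_def dist_real_def by auto
          have ne: "\<forall>s\<in>{a..b}. VI_Sol (Hfam G0 G1 s) K \<noteq> {} \<and> VI_Sol (Hfam G0 G1 s) K \<subseteq> cball 0 R"
            using \<delta>(2) near ab unfolding \<Psi>_def by blast
          define U where "U = (\<Union>s\<in>{a..b}. VI_Sol (Hfam G0 G1 s) K)"
          have Uc: "connected U" unfolding U_def by (rule conn_union[OF assms(2,3) c mo ab ne])
          have US: "U \<subseteq> S" unfolding U_def using \<Psi>S ab unfolding \<Psi>_def by blast
          have tab: "t \<in> {a..b}" "t' \<in> {a..b}" unfolding a_def b_def by auto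
          obtain y where y: "y \<in> \<Psi> t" using tne by blast
          have yU: "y \<in> U" using y tab unfolding U_def \<Psi>_def by blast
          have "U \<subseteq> connected_component_set S y"
            by (rule connected_component_maximal[OF yU Uc US])
          also have "\<dots> = C" unfolding C_def using y tC C_def connected_component_eq by blast
          finally have UC: "U \<subseteq> C" .
          have "\<Psi> t' \<subseteq> U" using tab unfolding U_def \<Psi>_def by blast
          moreover have "\<Psi> t' \<noteq> {}" using \<delta>(2)[OF t'(1)] t'(2) unfolding dist_real_def by blast
          ultimately show "t' \<in> T" unfolding T_def using t'(1) UC by blast
        qed
      qed
      have Tsub: "T \<subseteq> {0..1}" unfolding T_def by auto
      have Tcl: "closedin (top_of_set {0..1}) T" by (rule closed_subset[OF Tsub Tclosed])
      have "connected {0..1::real}" by simp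
      then have "T = {} \<or> T = {0..1}"
        unfolding connected_clopen using Topen Tcl by blast
      then have "1 \<in> T" using T0 by auto
      moreover have "\<Psi> 1 = VI_Sol (F_xi m F \<xi>1) K" unfolding \<Psi>_def Hfam_def G1_def by simp
      ultimately show ?thesis unfolding T_def by auto
    qed
    have "S \<subseteq> C"
    proof
      fix z assume "z \<in> S"
      then obtain \<xi> where "\<xi> \<in> ri_simplex m" "z \<in> VI_Sol (F_xi m F \<xi>) K" using Sel by blast
      then show "z \<in> C" using key by blast
    qed
    then have "S = C" using CS by blast
    then have "connected S" unfolding C_def using connected_connected_component by metis
    then show False using nc by blast
  qed
  have partB: "connected S" if bS: "bounded S" and neS: "S \<noteq> {}"
  proof (rule ccontr)
    assume nc: "\<not> connected S"
    obtain x where x: "x \<in> S" using neS by blast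
    have "bounded (connected_component_set S x)"
      using bounded_subset[OF bS connected_component_subset] .
    then show False using partA[OF nc x] by blast
  qed
  show ?thesis using partA partB unfolding S_def by blast
qed

end
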